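(* Let $p$ be a prime, let $n\geqslant 2$ be an integer, let $m\geqslant 0$ be an integer and let $k\geqslant 2$ be an integer not divisible by $p$. For positive integers $a,r$ let $w(a,r)=\frac{1}{r}\sum_{d\mid r}\mu(d)\,a^{r/d}$, where $\mu$ is the Möbius function. Then $$\frac{w(n^{p^m},k)}{p^m\, w(n,p^mk)} \geqslant 1 - \frac{k}{2n^{p^mk/2}}.$$ *)

theory Defs
  imports Complex_Main "HOL-Computational_Algebra.Squarefree"
begin

definition moebius_mu :: "nat \<Rightarrow> int" where
  "moebius_mu d = (if squarefree d then (-1) ^ card (prime_factors d) else 0)"

definition necklace_w :: "nat \<Rightarrow> nat \<Rightarrow> real" where
  "necklace_w a r = (1 / real r) * (\<Sum>d \<in> {d. d dvd r}. real_of_int (moebius_mu d) * real a ^ (r div d))"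

end

theory Submission
  imports Defs
begin

definition SS :: "nat \<Rightarrow> nat \<Rightarrow> real" where
  "SS a r = (\<Sum>d \<in> {d. d dvd r}. real_of_int (moebius_mu d) * real a ^ (r div d))"

lemma w_SS: "necklace_w a r = SS a r / real r"
  unfolding necklace_w_def SS_def by simp

lemma mu_one: "moebius_mu 1 = 1"
  unfolding moebius_mu_def by simp

lemma mu_sq: assumes "p ^ 2 dvd d" "prime p" shows "moebius_mu d = 0"
proof -
  have "\<not> squarefree d" using assms squarefreeD[of d p] by auto
  thus ?thesis unfolding moebius_mu_def by simp
qed

lemma mu_mult: assumes "prime (p::nat)" "\<not> p dvd e" "e > 0"
  shows "moebius_mu (p * e) = - moebius_mu e"
proof -
  have cop: "coprime p e" using assms by (simp add: prime_imp_coprime)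
  have sq: "squarefree (p*e) \<longleftrightarrow> squarefree e"
    using squarefree_mult_coprime[OF cop] squarefree_prime[OF assms(1)]
      squarefree_mono[of e "p*e"] by auto
  have pf: "prime_factors (p*e) = insert p (prime_factors e)"
    using prime_factors_product[of p e] assms prime_prime_factors[OF assms(1)]
    by (auto simp: prime_gt_0_nat)
  have "p \<notin> prime_factors e" using assms by auto
  hence "card (prime_factors (p*e)) = Suc (card (prime_factors e))"
    using pf by simp
  thus ?thesis unfolding moebius_mu_def using sq by simp
qed

lemma geom_lt: assumes "(x::real) \<ge> 2" shows "(\<Sum>i<h. x ^ i) < x ^ h"
proof (induction h)
  case 0 then show ?case by simp
next
  case (Suc h)
  have "2 * x ^ h \<le> x * x ^ h" using assms by (intro mult_right_mono) auto
  then show ?case using Suc by simp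
qed

lemma SS_pos: assumes "a \<ge> 2" "r \<ge> 1" shows "SS a r > 0"
proof -
  define D where "D = {d. d dvd r}"
  have fin: "finite D" unfolding D_def using assms by simp
  have one: "1 \<in> D" unfolding D_def by simp
  define g where "g d = r div d" for d
  have SSsplit: "SS a r = real a ^ r + (\<Sum>d\<in>D - {1}. real_of_int (moebius_mu d) * real a ^ g d)"
    unfolding SS_def D_def[symmetric] g_def
    using sum.remove[OF fin one, of "\<lambda>d. real_of_int (moebius_mu d) * real a ^ (r div d)"] mu_one
    by simp
  have inj: "inj_on g (D - {1})"
  proof (rule inj_onI)
    fix x y assume "x \<in> D - {1}" "y \<in> D - {1}" "g x = g y"
    then have "x dvd r" "y dvd r" "r div x = r div y" unfolding D_def g_def by auto
    moreover have c0: "r div x > 0" using \<open>x dvd r\<close> assms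
      by (metis div_greater_zero_iff dvd_imp_le gr0I le_zero_eq dvd_0_left_iff not_one_le_zero)
    moreover have eq: "x * (r div x) = y * (r div x)"
    proof -
      have "x * (r div x) = r" "y * (r div y) = r" using \<open>x dvd r\<close> \<open>y dvd r\<close> by simp_all
      then show ?thesis using \<open>r div x = r div y\<close> by simp
    qed
    ultimately show "x = y" using mult_right_cancel[of "r div x" x y] by linarith
  qed
  define h where "h = r div 2"
  have img: "g ` (D - {1}) \<subseteq> {1..h}"
  proof
    fix j assume "j \<in> g ` (D - {1})"
    then obtain d where d: "d dvd r" "d \<noteq> 1" "j = r div d" unfolding D_def g_def by auto
    have "d > 0" using d assms by (metis dvd_0_left_iff gr0I not_one_le_zero)
    hence "d \<ge> 2" using d by simp
    have "d \<le> r" using d assms by (simp add: dvd_imp_le)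
    have "j \<ge> 1" using d \<open>d \<le> r\<close> \<open>d>0\<close> using div_greater_zero_iff[of r d] by linarith
    moreover have "j \<le> h" unfolding h_def d(3) using \<open>d \<ge> 2\<close> by (simp add: div_le_mono2)
    ultimately show "j \<in> {1..h}" by simp
  qed
  have "\<bar>\<Sum>d\<in>D - {1}. real_of_int (moebius_mu d) * real a ^ g d\<bar>
      \<le> (\<Sum>d\<in>D - {1}. real a ^ g d)"
  proof -
    have "\<bar>\<Sum>d\<in>D - {1}. real_of_int (moebius_mu d) * real a ^ g d\<bar>
       \<le> (\<Sum>d\<in>D - {1}. \<bar>real_of_int (moebius_mu d) * real a ^ g d\<bar>)"
      by (rule sum_abs)
    also have "\<dots> \<le> (\<Sum>d\<in>D - {1}. real a ^ g d)"
    proof (rule sum_mono)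
      fix d
      have "\<bar>moebius_mu d\<bar> \<le> 1" unfolding moebius_mu_def by simp
      hence "\<bar>real_of_int (moebius_mu d)\<bar> \<le> 1" by linarith
      thus "\<bar>real_of_int (moebius_mu d) * real a ^ g d\<bar> \<le> real a ^ g d"
        by (simp add: abs_mult mult_left_le_one_le)
    qed
    finally show ?thesis .
  qed
  also have "(\<Sum>d\<in>D - {1}. real a ^ g d) = (\<Sum>j\<in>g ` (D - {1}). real a ^ j)"
    using sum.reindex[OF inj, of "\<lambda>j. real a ^ j"] by simp
  also have "\<dots> \<le> (\<Sum>j\<in>{1..h}. real a ^ j)"
    by (rule sum_mono2[OF _ img]) auto
  also have "\<dots> \<le> (\<Sum>j<Suc h. real a ^ j)"
    by (rule sum_mono2) auto
  also have "\<dots> < real a ^ Suc h" using geom_lt[of "real a" "Suc h"] assms by simp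
  also have "\<dots> \<le> real a ^ r" using assms unfolding h_def
    by (intro power_increasing) auto
  finally show ?thesis unfolding SSsplit by linarith
qed

lemma SS_decomp:
  assumes "prime p" "\<not> p dvd k" "k \<ge> 1" "m \<ge> 1"
  shows "SS n (p ^ m * k) = SS (n ^ (p ^ m)) k - SS (n ^ (p ^ (m - 1))) k"
proof -
  define q where "q = p ^ m"
  define D where "D = {d. d dvd q * k}"
  have p0: "p > 0" using assms prime_gt_0_nat by blast
  have q0: "q > 0" unfolding q_def using p0 by simp
  have fin: "finite D" unfolding D_def using q0 assms by simp
  define f where "f d = real_of_int (moebius_mu d) * real n ^ (q * k div d)" for d
  have S: "SS n (p^m * k) = sum f D" unfolding SS_def f_def D_def q_def by simp
  have D1: "{d\<in>D. \<not> p dvd d} = {d. d dvd k}"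
  proof safe
    fix d assume "d \<in> D" "\<not> p dvd d"
    then have "d dvd q * k" "coprime d q" unfolding D_def q_def using assms
      prime_imp_coprime[of p d] by (auto simp: coprime_commute)
    then show "d dvd k" using coprime_dvd_mult_right_iff by blast
  next
    fix d assume "d dvd k" thus "d \<in> D" unfolding D_def by simp
  next
    fix d assume "d dvd k" "p dvd d" thus False using assms by (meson dvd_trans)
  qed
  have sum1: "sum f {d\<in>D. \<not> p dvd d} = SS (n ^ q) k"
    unfolding D1 SS_def f_def
  proof (rule sum.cong[OF refl])
    fix d assume "d \<in> {d. d dvd k}"
    then obtain j where j: "k = d * j" by auto
    have "d > 0" using j assms by (metis gr0I mult_is_0 not_one_le_zero)
    then have "q * k div d = q * j" "k div d = j" unfolding j by auto
    then show "real_of_int (moebius_mu d) * real n ^ (q * k div d) =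
        real_of_int (moebius_mu d) * real (n ^ q) ^ (k div d)"
      by (simp add: power_mult)
  qed
  have D2: "{d\<in>D. p dvd d} = (\<lambda>e. p * e) ` {e. e dvd p^(m-1) * k}"
  proof safe
    fix d assume "d \<in> D" "p dvd d"
    then obtain e where e: "d = p * e" by auto
    have "q * k = p * (p^(m-1) * k)" unfolding q_def using assms
      by (metis mult.assoc power_eq_if not_one_le_zero)
    then have "e dvd p^(m-1) * k" using \<open>d \<in> D\<close> p0 unfolding D_def e by auto
    then show "d \<in> (\<lambda>e. p * e) ` {e. e dvd p^(m-1) * k}" using e by auto
  next
    fix e assume "e dvd p^(m-1) * k"
    moreover have "q * k = p * (p^(m-1) * k)" unfolding q_def using assms
      by (metis mult.assoc power_eq_if not_one_le_zero)
    ultimately show "p * e \<in> D" unfolding D_def by (metis mem_Collect_eq mult_dvd_mono dvd_refl)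
  qed simp
  have inj: "inj_on (\<lambda>e. p * e) {e. e dvd p^(m-1) * k}" using p0 by (auto intro: inj_onI)
  define E where "E = {e. e dvd p^(m-1) * k}"
  have finE: "finite E" unfolding E_def using assms p0 by simp
  have sum2: "sum f {d\<in>D. p dvd d} = sum (\<lambda>e. f (p*e)) E"
    unfolding D2 E_def using sum.reindex[OF inj] by simp
  have E1: "{e\<in>E. \<not> p dvd e} = {e. e dvd k}"
  proof safe
    fix d assume "d \<in> E" "\<not> p dvd d"
    then have "d dvd p^(m-1) * k" "coprime d (p^(m-1))" unfolding E_def using assms
      prime_imp_coprime[of p d] by (auto simp: coprime_commute)
    then show "d dvd k" using coprime_dvd_mult_right_iff by blast
  next
    fix d assume "d dvd k" thus "d \<in> E" unfolding E_def by simp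
  next
    fix d assume "d dvd k" "p dvd d" thus False using assms by (meson dvd_trans)
  qed
  have zero: "sum (\<lambda>e. f (p*e)) {e\<in>E. p dvd e} = 0"
  proof (rule sum.neutral, safe)
    fix e assume "p dvd e"
    then have "p^2 dvd p * e" by (simp add: power2_eq_square)
    then show "f (p*e) = 0" unfolding f_def using mu_sq assms by simp
  qed
  have sum3: "sum (\<lambda>e. f (p*e)) {e\<in>E. \<not> p dvd e} = - SS (n ^ (p ^ (m - 1))) k"
    unfolding E1 SS_def sum_negf[symmetric]
  proof (rule sum.cong[OF refl])
    fix d assume "d \<in> {d. d dvd k}"
    then obtain j where j: "k = d * j" by auto
    have "d > 0" using j assms by (metis gr0I mult_is_0 not_one_le_zero)
    have npd: "\<not> p dvd d" using j assms by auto
    have qq: "q = p * p^(m-1)" unfolding q_def using assms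
      by (metis power_eq_if not_one_le_zero)
    have "q * k div (p * d) = p^(m-1) * j" "k div d = j" unfolding j qq using \<open>d>0\<close> p0 by auto
    then show "f (p * d) = - (real_of_int (moebius_mu d) * real (n ^ p ^ (m - 1)) ^ (k div d))"
      unfolding f_def using mu_mult[OF assms(1) npd \<open>d>0\<close>]
      by (simp add: power_mult)
  qed
  have "sum f D = sum f {d\<in>D. p dvd d} + sum f {d\<in>D. \<not> p dvd d}"
  proof -
    have "D = {d\<in>D. p dvd d} \<union> {d\<in>D. \<not> p dvd d}" by auto
    moreover have "finite {d\<in>D. p dvd d}" "finite {d\<in>D. \<not> p dvd d}" using fin by auto
    moreover have "{d\<in>D. p dvd d} \<inter> {d\<in>D. \<not> p dvd d} = {}" by auto
    ultimately show ?thesis using sum.union_disjoint[of "{d\<in>D. p dvd d}" "{d\<in>D. \<not> p dvd d}" f]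
      by simp
  qed
  moreover have "sum (\<lambda>e. f (p*e)) E = sum (\<lambda>e. f (p*e)) {e\<in>E. p dvd e} + sum (\<lambda>e. f (p*e)) {e\<in>E. \<not> p dvd e}"
  proof -
    have "E = {e\<in>E. p dvd e} \<union> {e\<in>E. \<not> p dvd e}" by auto
    moreover have "finite {e\<in>E. p dvd e}" "finite {e\<in>E. \<not> p dvd e}" using finE by auto
    moreover have "{e\<in>E. p dvd e} \<inter> {e\<in>E. \<not> p dvd e} = {}" by auto
    ultimately show ?thesis using sum.union_disjoint[of "{e\<in>E. p dvd e}" "{e\<in>E. \<not> p dvd e}" "\<lambda>e. f (p*e)"]
      by simp
  qed
  ultimately show ?thesis using S sum1 sum2 zero sum3 unfolding q_def by simp
qed

theorem lemma2p5:
  fixes p n m k :: nat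
  assumes "prime p" and "n \<ge> 2" and "k \<ge> 2" and "\<not> p dvd k"
  shows "necklace_w (n ^ (p ^ m)) k / (real (p ^ m) * necklace_w n (p ^ m * k))
           \<ge> 1 - real k / (2 * real n powr (real (p ^ m * k) / 2))"
proof -
  define q where "q = p ^ m"
  have p0: "p > 0" using assms prime_gt_0_nat by blast
  have q0: "q > 0" unfolding q_def using p0 by simp
  have eqW: "real q * necklace_w n (q * k) = SS n (q * k) / real k"
    unfolding w_SS using q0 assms by (simp add: field_simps)
  have eqV: "necklace_w (n ^ q) k = SS (n ^ q) k / real k" unfolding w_SS ..
  have pos: "SS n (q * k) > 0" using SS_pos[of n "q*k"] assms q0
    by (simp add: Suc_le_eq)
  have le: "SS n (q * k) \<le> SS (n ^ q) k"
  proof (cases "m = 0")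
    case True then show ?thesis unfolding q_def by simp
  next
    case False
    have "n ^ (p ^ (m-1)) \<ge> n"
    proof -
      have "1 \<le> p ^ (m-1)" using p0 by simp
      then have "n ^ 1 \<le> n ^ (p ^ (m-1))" using assms by (intro power_increasing) auto
      then show ?thesis by simp
    qed
    then have "SS (n ^ (p ^ (m-1))) k > 0" using SS_pos assms by simp
    then show ?thesis using SS_decomp[of p k m n] assms False unfolding q_def by simp
  qed
  have "1 \<le> necklace_w (n ^ q) k / (real q * necklace_w n (q * k))"
    unfolding eqW eqV using pos le assms by (simp add: divide_right_mono)
  moreover have "real k / (2 * real n powr (real (p ^ m * k) / 2)) \<ge> 0" by simp
  ultimately show ?thesis unfolding q_def by linarith
qed

end
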